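(* Let $\delta\in(0,1/2)$ and let $y_0>2$ be such that for every $y\in[2,y_0]$ and $R>2$ the map $x\mapsto g_R(x,y)x^{-\delta}$ is non-increasing on $(0,\infty)$. Then for all $R>2$, $x\ge0$, $y\in[2,y_0]$: (i) $xg_R(x,y)\le(1+\delta)\rho_R(x,y)$; (ii) $xg_R(x,y)^2\le(1+2\delta)h_R(x,y)$; (iii) $xh_R(x,y)\le(1+\delta)^2\rho_R(x,y)^2$; (iv) $xg_R(x,y)^2-h_R(x,y)\le\dfrac{2\delta(1+\delta)}{1+2\delta}\rho_R(x,y)g_R(x,y)$; (v) $\rho_R(x,y)^2\le2(1+2\delta)\phi_R(x,y)\le2(1+2\delta)\tau(x,y)$; (vi) $(\partial_x\psi_R(x,y))^2\le(1+2\delta)g_R(x,y)^2$.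
   Context: Let $\xi$ be a nondecreasing $C^2$ function on $[0,\infty)$ with $\xi(x)=(x-1)^3\vee0$ for $x\in[0,3/2]$ and $\xi(x)=1$ for $x\ge2$. For $x\ge0$, $y\ge2$: $\zeta(x,y)=2x+(yx^{y-1}-2x)\xi(x)$, $\tau(x,y)=\int_0^x\zeta(s,y)\,ds$. For $R>2$: $g_R(x,y)=\sqrt{(\partial_x\zeta)(x\wedge R,y)}$, $h_R(x,y)=\int_0^xg_R(s,y)^2\,ds$, $\phi_R(x,y)=\int_0^xh_R(s,y)\,ds$, $\rho_R(x,y)=\int_0^xg_R(s,y)\,ds$, $\psi_R(x,y)=\sqrt{xh_R(x,y)}$ (at $x=0$, $\partial_x\psi_R$ denotes the right derivative). *)

theory Defs
  imports "HOL-Analysis.Analysis"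
begin

definition C2_on_nonneg :: "(real \<Rightarrow> real) \<Rightarrow> bool" where
  "C2_on_nonneg f \<longleftrightarrow> (\<exists>f1 f2.
     (\<forall>x\<ge>0. (f has_real_derivative f1 x) (at x within {0..})) \<and>
     (\<forall>x\<ge>0. (f1 has_real_derivative f2 x) (at x within {0..})) \<and>
     continuous_on {0..} f2)"

definition admissible_xi :: "(real \<Rightarrow> real) \<Rightarrow> bool" where
  "admissible_xi \<xi> \<longleftrightarrow> mono_on {0..} \<xi> \<and> C2_on_nonneg \<xi> \<and>
     (\<forall>x\<in>{0..3/2}. \<xi> x = max ((x - 1) ^ 3) 0) \<and>
     (\<forall>x\<ge>2. \<xi> x = 1)"

definition zeta :: "(real \<Rightarrow> real) \<Rightarrow> real \<Rightarrow> real \<Rightarrow> real" where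
  "zeta \<xi> x y = 2 * x + (y * x powr (y - 1) - 2 * x) * \<xi> x"

definition tau :: "(real \<Rightarrow> real) \<Rightarrow> real \<Rightarrow> real \<Rightarrow> real" where
  "tau \<xi> x y = integral {0..x} (\<lambda>s. zeta \<xi> s y)"

definition dzeta :: "(real \<Rightarrow> real) \<Rightarrow> real \<Rightarrow> real \<Rightarrow> real" where
  "dzeta \<xi> x y = vector_derivative (\<lambda>s. zeta \<xi> s y) (at x within {0..})"

definition gR :: "(real \<Rightarrow> real) \<Rightarrow> real \<Rightarrow> real \<Rightarrow> real \<Rightarrow> real" where
  "gR \<xi> R x y = sqrt (dzeta \<xi> (min x R) y)"

definition hR :: "(real \<Rightarrow> real) \<Rightarrow> real \<Rightarrow> real \<Rightarrow> real \<Rightarrow> real" where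
  "hR \<xi> R x y = integral {0..x} (\<lambda>s. (gR \<xi> R s y)\<^sup>2)"

definition phiR :: "(real \<Rightarrow> real) \<Rightarrow> real \<Rightarrow> real \<Rightarrow> real \<Rightarrow> real" where
  "phiR \<xi> R x y = integral {0..x} (\<lambda>s. hR \<xi> R s y)"

definition rhoR :: "(real \<Rightarrow> real) \<Rightarrow> real \<Rightarrow> real \<Rightarrow> real \<Rightarrow> real" where
  "rhoR \<xi> R x y = integral {0..x} (\<lambda>s. gR \<xi> R s y)"

definition psiR :: "(real \<Rightarrow> real) \<Rightarrow> real \<Rightarrow> real \<Rightarrow> real \<Rightarrow> real" where
  "psiR \<xi> R x y = sqrt (x * hR \<xi> R x y)"

end

theory Submission
  imports Defs
begin

lemma nb_Icc: "a < (b::real) \<Longrightarrow> x \<in> {a..b} \<Longrightarrow> at x within {a..b} \<noteq> bot"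
  by (metis atLeastAtMost_iff atLeastatMost_empty atLeastatMost_empty_iff
    at_within_Icc_at at_within_Icc_at_left at_within_Icc_at_right
    linorder_neq_iff trivial_limit_at trivial_limit_at_left_real
    trivial_limit_at_right_real)

lemma nb_Ici: "x \<in> {a::real..} \<Longrightarrow> at x within {a..} \<noteq> bot"
  by (metis (no_types, lifting) atLeast_iff at_within_union bot_eq_sup_iff
    ivl_disj_un_one(7) trivial_limit_at_right_real)

lemma xi_basic:
  assumes xi: "admissible_xi \<xi>"
  shows "\<And>x. 0 \<le> x \<Longrightarrow> x \<le> 1 \<Longrightarrow> \<xi> x = 0"
    and "\<And>x. 2 \<le> x \<Longrightarrow> \<xi> x = 1"
    and "\<And>x. 0 \<le> x \<Longrightarrow> 0 \<le> \<xi> x \<and> \<xi> x \<le> 1"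
    and "mono_on {0..} \<xi>"
proof -
  have m: "mono_on {0..} \<xi>" and e: "\<forall>x\<in>{0..3/2}. \<xi> x = max ((x - 1) ^ 3) 0"
    and o: "\<forall>x\<ge>2. \<xi> x = 1" using xi unfolding admissible_xi_def by auto
  show "mono_on {0..} \<xi>" by fact
  show z: "\<xi> x = 0" if "0 \<le> x" "x \<le> 1" for x
  proof -
    have "(x-1)^3 \<le> 0" using that by (simp add: power_le_zero_eq_numeral)
    then show ?thesis using e that by auto
  qed
  show "\<xi> x = 1" if "2 \<le> x" for x using o that by auto
  show "0 \<le> \<xi> x \<and> \<xi> x \<le> 1" if "0 \<le> x" for x
  proof
    have "\<xi> 0 \<le> \<xi> x" using m that by (auto intro: mono_onD)
    then show "0 \<le> \<xi> x" using z[of 0] by simp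
    show "\<xi> x \<le> 1"
    proof (cases "x \<le> 2")
      case True
      then have "\<xi> x \<le> \<xi> 2" using m that by (auto intro: mono_onD)
      then show ?thesis using o by auto
    next
      case False then show ?thesis using o by auto
    qed
  qed
qed

definition Zf :: "(real \<Rightarrow> real) \<Rightarrow> (real \<Rightarrow> real) \<Rightarrow> real \<Rightarrow> real \<Rightarrow> real" where
  "Zf \<xi> \<xi>1 y x = 2 + (y*(y-1)*x powr (y-2) - 2) * \<xi> x + (y * x powr (y-1) - 2*x) * \<xi>1 x"

lemma zeta_facts:
  assumes xi: "admissible_xi \<xi>" and y2: "2 \<le> y"
  shows "\<And>x. 0 \<le> x \<Longrightarrow> ((\<lambda>s. zeta \<xi> s y) has_real_derivative dzeta \<xi> x y) (at x within {0..})"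
    and "continuous_on {0..} (\<lambda>x. dzeta \<xi> x y)"
    and "\<And>x. 0 \<le> x \<Longrightarrow> 2 \<le> dzeta \<xi> x y"
    and "\<And>x. 0 \<le> x \<Longrightarrow> x \<le> 1 \<Longrightarrow> dzeta \<xi> x y = 2"
    and "\<And>x. 2 \<le> x \<Longrightarrow> dzeta \<xi> x y = y*(y-1)*x powr (y-2)"
proof -
  note xb = xi_basic[OF xi]
  obtain \<xi>1 \<xi>2 where d1: "\<And>x. x\<ge>0 \<Longrightarrow> (\<xi> has_real_derivative \<xi>1 x) (at x within {0..})"
    and d2: "\<And>x. x\<ge>0 \<Longrightarrow> (\<xi>1 has_real_derivative \<xi>2 x) (at x within {0..})"
    using xi unfolding admissible_xi_def C2_on_nonneg_def by blast
  have c\<xi>: "continuous_on {0..} \<xi>" by (rule DERIV_continuous_on[OF d1]) auto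
  have c\<xi>1: "continuous_on {0..} \<xi>1" by (rule DERIV_continuous_on[OF d2]) auto
  have d1at: "(\<xi> has_real_derivative \<xi>1 x) (at x)" if "x > 0" for x
    using d1[of x] that at_within_interior[of x "{0..}"] by auto
  have \<xi>1pos: "\<xi>1 x \<ge> 0" if "x > 0" for x
    by (rule mono_on_imp_deriv_nonneg[OF xb(4) d1at[OF that]]) (use that in auto)
  have \<xi>1z: "\<xi>1 x = 0" if "0 \<le> x" "x \<le> 1" for x
  proof -
    have a: "(\<xi> has_real_derivative \<xi>1 x) (at x within {0..1})"
      using d1[of x] that by (auto intro: has_field_derivative_subset)
    have "((\<lambda>_. 0) has_real_derivative \<xi>1 x) (at x within {0..1})"
      by (rule has_field_derivative_transform_within[OF a, of 1]) (use that xb(1) in auto)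
    moreover have "((\<lambda>_. 0::real) has_real_derivative 0) (at x within {0..1})" by simp
    ultimately show ?thesis using nb_Icc[of 0 1 x] that
      by (metis atLeastAtMost_iff has_real_derivative_iff_has_vector_derivative
          vector_derivative_unique_within zero_less_one)
  qed
  have \<xi>1o: "\<xi>1 x = 0" if "2 \<le> x" for x
  proof -
    have a: "(\<xi> has_real_derivative \<xi>1 x) (at x within {2..})"
      using d1[of x] that by (auto intro: has_field_derivative_subset)
    have "((\<lambda>_. 1) has_real_derivative \<xi>1 x) (at x within {2..})"
      by (rule has_field_derivative_transform_within[OF a, of 1]) (use that xb(2) in auto)
    moreover have "((\<lambda>_. 1::real) has_real_derivative 0) (at x within {2..})" by simp
    ultimately show ?thesis using nb_Ici[of x 2] that
      by (metis atLeast_iff has_real_derivative_iff_has_vector_derivative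
          vector_derivative_unique_within)
  qed
  define Z where "Z = Zf \<xi> \<xi>1 y"
  have dZ: "((\<lambda>s. zeta \<xi> s y) has_real_derivative Z x) (at x)" if "x > 0" for x
  proof -
    have p1: "((\<lambda>s. s powr (y-1)) has_real_derivative (y-1) * x powr (y-2)) (at x)"
      using has_real_derivative_powr[OF that, of "y-1"] by (simp add: algebra_simps)
    have "((\<lambda>s. 2 * s + (y * s powr (y-1) - 2 * s) * \<xi> s) has_real_derivative
          2 + ((y * ((y-1) * x powr (y-2)) - 2) * \<xi> x + (y * x powr (y-1) - 2 * x) * \<xi>1 x)) (at x)"
      by (rule DERIV_add[OF _ DERIV_mult'[OF DERIV_diff[OF DERIV_cmult[OF p1]] d1at[OF that]], THEN DERIV_cong])
         (auto intro!: derivative_eq_intros simp: algebra_simps)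
    then show ?thesis unfolding zeta_def Z_def Zf_def by (simp add: algebra_simps)
  qed
  have Z2: "Z x = 2" if "0 < x" "x \<le> 1" for x
    unfolding Z_def Zf_def using xb(1)[of x] \<xi>1z[of x] that by simp
  define D where "D x = (if x \<le> 1 then 2 else Z x)" for x
  have dD: "((\<lambda>s. zeta \<xi> s y) has_real_derivative D x) (at x within {0..})" if "0 \<le> x" for x
  proof (cases "x = 0")
    case True
    have "((\<lambda>s. 2 * s) has_real_derivative 2) (at x within {0..})"
      by (auto intro!: derivative_eq_intros)
    then have "((\<lambda>s. zeta \<xi> s y) has_real_derivative 2) (at x within {0..})"
      by (rule has_field_derivative_transform_within[of _ _ _ _ 1])
        (use True xb(1) in \<open>auto simp: zeta_def dist_real_def\<close>)
    then show ?thesis using True by (simp add: D_def)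
  next
    case False
    then have "x > 0" using that by auto
    then show ?thesis using dZ[of x] Z2[of x] unfolding D_def
      by (auto intro: has_field_derivative_at_within)
  qed
  have dzD: "dzeta \<xi> x y = D x" if "0 \<le> x" for x
    unfolding dzeta_def using dD[OF that] nb_Ici[of x 0] that
    by (metis atLeast_iff has_real_derivative_iff_has_vector_derivative vector_derivative_within)
  show "((\<lambda>s. zeta \<xi> s y) has_real_derivative dzeta \<xi> x y) (at x within {0..})" if "0 \<le> x" for x
    using dD[OF that] dzD[OF that] by simp
  have cZ: "continuous_on {1..} Z"
    unfolding Z_def Zf_def
    by (intro continuous_intros continuous_on_subset[OF c\<xi>] continuous_on_subset[OF c\<xi>1]) auto
  have "continuous_on ({0..1} \<union> {1..}) D"
  proof (rule continuous_on_closed_Un)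
    show "continuous_on {0..1} D"
      by (rule continuous_on_eq[of _ "\<lambda>_. 2"]) (auto simp: D_def)
    show "continuous_on {1..} D"
      by (rule continuous_on_eq[OF cZ]) (use Z2[of 1] in \<open>auto simp: D_def\<close>)
  qed auto
  moreover have "{0..1} \<union> {1..} = {0::real..}" by auto
  ultimately have "continuous_on {0..} D" by simp
  then show "continuous_on {0..} (\<lambda>x. dzeta \<xi> x y)"
    by (rule continuous_on_eq) (simp add: dzD)
  show "dzeta \<xi> x y = 2" if "0 \<le> x" "x \<le> 1" for x using dzD[of x] that by (simp add: D_def)
  show "dzeta \<xi> x y = y*(y-1)*x powr (y-2)" if "2 \<le> x" for x
    using dzD[of x] that xb(2)[of x] \<xi>1o[of x] by (simp add: D_def Z_def Zf_def)
  show "2 \<le> dzeta \<xi> x y" if "0 \<le> x" for x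
  proof (cases "x \<le> 1")
    case True then show ?thesis using dzD[of x] that by (simp add: D_def)
  next
    case False
    then have x1: "x \<ge> 1" by simp
    have a1: "x powr (y-2) \<ge> 1" using ge_one_powr_ge_zero[OF x1, of "y-2"] y2 by simp
    have "y*(y-1) \<ge> 2*1" using y2 by (intro mult_mono) auto
    then have "y*(y-1)*x powr (y-2) \<ge> 2*1" using a1 y2 by (intro mult_mono) auto
    then have a: "y*(y-1)*x powr (y-2) - 2 \<ge> 0" by simp
    have b1: "x powr (y-1) \<ge> x powr 1" using x1 y2 by (intro powr_mono) auto
    have b: "y * x powr (y-1) - 2*x \<ge> 0"
    proof -
      have "y * x powr (y-1) \<ge> 2 * x powr (y-1)" using y2 by (intro mult_right_mono) auto
      moreover have "x powr 1 = x" using x1 by simp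
      ultimately show ?thesis using b1 by linarith
    qed
    have "Z x \<ge> 2" unfolding Z_def Zf_def
      using a b xb(3)[of x] \<xi>1pos[of x] x1 by (simp add: add_nonneg_nonneg)
    then show ?thesis using dzD[of x] that False by (simp add: D_def)
  qed
qed


locale absg =
  fixes g :: "real \<Rightarrow> real" and \<delta> :: real
  assumes cont: "continuous_on {0..} g"
    and pos: "\<And>t. 0 \<le> t \<Longrightarrow> 0 < g t"
    and anti: "antimono_on {0<..} (\<lambda>x. g x * x powr (- \<delta>))"
    and K: "\<And>t s. 0 \<le> t \<Longrightarrow> t \<le> s \<Longrightarrow> g t \<le> (1 + \<delta>) * g s"
    and dpos: "0 < \<delta>" and dlt: "\<delta> < 1/2"
begin

definition "rho x = integral {0..x} g"
definition "hh x = integral {0..x} (\<lambda>s. (g s)\<^sup>2)"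

lemma cont_x: "continuous_on {0..x} g"
  by (rule continuous_on_subset[OF cont]) auto

lemma int_g: "g integrable_on {0..x}"
  using cont_x by (rule integrable_continuous_interval)

lemma int_g2: "(\<lambda>s. (g s)\<^sup>2) integrable_on {0..x}"
  using cont_x by (intro integrable_continuous_interval continuous_intros)

lemma rho_nonneg: "0 \<le> rho x"
  unfolding rho_def by (rule integral_nonneg[OF int_g]) (use pos in \<open>auto simp: less_imp_le\<close>)

lemma hh_nonneg: "0 \<le> hh x"
  unfolding hh_def by (rule integral_nonneg[OF int_g2]) auto

lemma low:
  assumes "0 \<le> s" "s \<le> x" "0 < x"
  shows "g x * x powr (- \<delta>) * s powr \<delta> \<le> g s"
proof (cases "s = 0")
  case True then show ?thesis using pos[of 0] by simp
next
  case False
  then have s: "0 < s" using assms by simp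
  have "g x * x powr (- \<delta>) \<le> g s * s powr (- \<delta>)"
    using monotone_onD[OF anti, of s x] s assms by auto
  then have "g x * x powr (- \<delta>) * s powr \<delta> \<le> g s * s powr (- \<delta>) * s powr \<delta>"
    by (intro mult_right_mono) auto
  also have "\<dots> = g s" using s by (simp add: mult.assoc powr_add[symmetric])
  finally show ?thesis .
qed

lemma item1: assumes "0 \<le> x" shows "x * g x \<le> (1 + \<delta>) * rho x"
proof (cases "x = 0")
  case True then show ?thesis by (simp add: rho_def)
next
  case False
  then have x: "0 < x" using assms by simp
  define c where "c = g x * x powr (- \<delta>)"
  have "((\<lambda>s. c * s powr \<delta>) has_integral c * (x powr (\<delta>+1) / (\<delta>+1))) {0..x}"
    using has_integral_powr_from_0[of \<delta> x] dpos x by (intro has_integral_mult_right) auto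
  moreover have "(g has_integral rho x) {0..x}" unfolding rho_def using int_g by auto
  ultimately have "c * (x powr (\<delta>+1) / (\<delta>+1)) \<le> rho x"
    by (rule has_integral_le) (use low x in \<open>auto simp: c_def\<close>)
  moreover have "c * (x powr (\<delta>+1) / (\<delta>+1)) = g x * x / (1 + \<delta>)"
    unfolding c_def using x by (simp add: powr_add[symmetric] mult.assoc add.commute)
  ultimately show ?thesis using dpos by (simp add: field_simps)
qed

lemma item2: assumes "0 \<le> x" shows "x * (g x)\<^sup>2 \<le> (1 + 2 * \<delta>) * hh x"
proof (cases "x = 0")
  case True then show ?thesis by (simp add: hh_def)
next
  case False
  then have x: "0 < x" using assms by simp
  define c where "c = (g x * x powr (- \<delta>))\<^sup>2"
  have "((\<lambda>s. c * s powr (2*\<delta>)) has_integral c * (x powr (2*\<delta>+1) / (2*\<delta>+1))) {0..x}"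
    using has_integral_powr_from_0[of "2*\<delta>" x] dpos x by (intro has_integral_mult_right) auto
  moreover have "((\<lambda>s. (g s)\<^sup>2) has_integral hh x) {0..x}" unfolding hh_def using int_g2 by auto
  ultimately have "c * (x powr (2*\<delta>+1) / (2*\<delta>+1)) \<le> hh x"
  proof (rule has_integral_le)
    fix s assume s: "s \<in> {0..x}"
    have a: "0 \<le> g x * x powr (- \<delta>) * s powr \<delta>" using pos[of x] x by auto
    have "(g x * x powr (- \<delta>) * s powr \<delta>)\<^sup>2 \<le> (g s)\<^sup>2"
      using low[of s x] s x a by (intro power_mono) auto
    moreover have "(g x * x powr (- \<delta>) * s powr \<delta>)\<^sup>2 = c * s powr (2*\<delta>)"
      unfolding c_def using s by (simp add: power_mult_distrib power2_eq_square powr_add[symmetric])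
    ultimately show "c * s powr (2*\<delta>) \<le> (g s)\<^sup>2" by simp
  qed
  moreover have "c * (x powr (2*\<delta>+1) / (2*\<delta>+1)) = (g x)\<^sup>2 * x / (1 + 2*\<delta>)"
  proof -
    have "(x powr (- \<delta>))\<^sup>2 * x powr (2*\<delta>+1) = x"
      using x by (simp add: power2_eq_square powr_add[symmetric])
    then show ?thesis unfolding c_def
      by (simp add: power_mult_distrib add.commute mult.assoc)
  qed
  ultimately show ?thesis using dpos by (simp add: field_simps)
qed

lemma rho_up: assumes "0 \<le> x" shows "rho x \<le> (1 + \<delta>) * x * g x"
proof -
  have "rho x \<le> integral {0..x} (\<lambda>s. (1 + \<delta>) * g x)"
    unfolding rho_def by (rule integral_le[OF int_g]) (use K in auto)
  then show ?thesis using assms by (simp add: mult_ac)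
qed

lemma hh_up: assumes "0 \<le> x" shows "hh x \<le> (1 + \<delta>) * g x * rho x"
proof -
  have "hh x \<le> integral {0..x} (\<lambda>s. ((1 + \<delta>) * g x) * g s)"
    unfolding hh_def
  proof (rule integral_le[OF int_g2])
    show "(\<lambda>s. ((1 + \<delta>) * g x) * g s) integrable_on {0..x}"
      using integrable_on_cmult_left[OF int_g[of x], of "(1 + \<delta>) * g x"] by simp
    fix s assume "s \<in> {0..x}"
    then show "(g s)\<^sup>2 \<le> (1 + \<delta>) * g x * g s"
      using K[of s x] pos[of s] by (auto simp: power2_eq_square intro: mult_right_mono)
  qed
  also have "\<dots> = (1 + \<delta>) * g x * rho x" unfolding rho_def by simp
  finally show ?thesis .
qed

lemma item3: assumes "0 \<le> x" shows "x * hh x \<le> (1 + \<delta>)\<^sup>2 * (rho x)\<^sup>2"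
proof -
  have "x * hh x \<le> x * ((1 + \<delta>) * g x * rho x)"
    using hh_up[OF assms] assms by (intro mult_left_mono) auto
  also have "\<dots> = ((1 + \<delta>) * rho x) * (x * g x)" by (simp add: mult_ac)
  also have "\<dots> \<le> ((1 + \<delta>) * rho x) * ((1 + \<delta>) * rho x)"
    using item1[OF assms] rho_nonneg[of x] dpos by (intro mult_left_mono) auto
  finally show ?thesis by (simp add: power2_eq_square mult_ac)
qed

lemma item4: assumes "0 \<le> x"
  shows "x * (g x)\<^sup>2 - hh x \<le> 2 * \<delta> * (1 + \<delta>) / (1 + 2 * \<delta>) * rho x * g x"
proof -
  have "x * (g x)\<^sup>2 - hh x \<le> x * (g x)\<^sup>2 - x * (g x)\<^sup>2 / (1 + 2 * \<delta>)"
    using item2[OF assms] dpos by (simp add: field_simps)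
  also have "\<dots> = 2 * \<delta> / (1 + 2 * \<delta>) * ((x * g x) * g x)"
    using dpos by (simp add: field_simps power2_eq_square)
  also have "\<dots> \<le> 2 * \<delta> / (1 + 2 * \<delta>) * (((1 + \<delta>) * rho x) * g x)"
    using item1[OF assms] pos[OF assms] dpos
    by (intro mult_left_mono mult_right_mono) auto
  also have "\<dots> = 2 * \<delta> * (1 + \<delta>) / (1 + 2 * \<delta>) * rho x * g x" by simp
  finally show ?thesis .
qed

lemma cs: assumes "0 \<le> x" shows "(rho x)\<^sup>2 \<le> x * hh x"
proof (cases "x = 0")
  case True then show ?thesis by (simp add: rho_def hh_def)
next
  case False
  then have x: "0 < x" using assms by simp
  define c where "c = rho x / x"
  have i1: "((\<lambda>s. (g s)\<^sup>2) has_integral hh x) {0..x}" unfolding hh_def using int_g2 by auto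
  have i2: "((\<lambda>s. 2 * c * g s) has_integral 2 * c * rho x) {0..x}"
    unfolding rho_def using int_g by (intro has_integral_mult_right) auto
  have i3: "((\<lambda>s. c\<^sup>2) has_integral c\<^sup>2 * x) {0..x}"
    using has_integral_const_real[of "c\<^sup>2" 0 x] x by (simp add: mult.commute)
  have "((\<lambda>s. (g s)\<^sup>2 - 2 * c * g s + c\<^sup>2) has_integral hh x - 2 * c * rho x + c\<^sup>2 * x) {0..x}"
    by (intro has_integral_add has_integral_diff i1 i2 i3)
  moreover have "(g s)\<^sup>2 - 2 * c * g s + c\<^sup>2 = (g s - c)\<^sup>2" for s
    by (simp add: power2_eq_square algebra_simps)
  ultimately have int: "((\<lambda>s. (g s - c)\<^sup>2) has_integral hh x - 2 * c * rho x + c\<^sup>2 * x) {0..x}"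
    by simp
  have "0 \<le> hh x - 2 * c * rho x + c\<^sup>2 * x"
    by (rule has_integral_nonneg[OF int]) simp
  also have "hh x - 2 * c * rho x + c\<^sup>2 * x = hh x - (rho x)\<^sup>2 / x"
    unfolding c_def using x by (simp add: field_simps power2_eq_square)
  finally show ?thesis using x by (simp add: field_simps)
qed

lemma rho_g_le: assumes "0 \<le> x" shows "rho x * g x \<le> (1 + 2 * \<delta>) * hh x"
proof -
  have "(rho x * g x)\<^sup>2 = (rho x)\<^sup>2 * (g x)\<^sup>2" by (simp add: power_mult_distrib)
  also have "\<dots> \<le> (x * hh x) * (g x)\<^sup>2" using cs[OF assms] by (intro mult_right_mono) auto
  also have "\<dots> = hh x * (x * (g x)\<^sup>2)" by simp
  also have "\<dots> \<le> hh x * ((1 + 2 * \<delta>) * hh x)"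
    using item2[OF assms] hh_nonneg[of x] by (intro mult_left_mono) auto
  also have "\<dots> \<le> ((1 + 2 * \<delta>) * hh x)\<^sup>2"
  proof -
    have "1 * hh x \<le> (1 + 2 * \<delta>) * hh x"
      using hh_nonneg[of x] dpos by (intro mult_right_mono) auto
    then have "hh x * ((1 + 2 * \<delta>) * hh x) \<le> ((1 + 2 * \<delta>) * hh x) * ((1 + 2 * \<delta>) * hh x)"
      using hh_nonneg[of x] dpos by (intro mult_right_mono) auto
    then show ?thesis by (simp only: power2_eq_square)
  qed
  finally have "(rho x * g x)\<^sup>2 \<le> ((1 + 2 * \<delta>) * hh x)\<^sup>2" .
  moreover have "0 \<le> (1 + 2 * \<delta>) * hh x" using hh_nonneg[of x] dpos by simp
  ultimately show ?thesis by (rule power2_le_imp_le)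
qed

lemma rho_deriv: assumes "0 \<le> t" "t \<le> b"
  shows "(rho has_real_derivative g t) (at t within {0..b})"
  unfolding rho_def[abs_def]
  by (rule integral_has_real_derivative[OF cont_x]) (use assms in auto)

lemma hh_deriv: assumes "0 \<le> t" "t \<le> b"
  shows "(hh has_real_derivative (g t)\<^sup>2) (at t within {0..b})"
  unfolding hh_def[abs_def]
proof (rule integral_has_real_derivative)
  show "continuous_on {0..b} (\<lambda>s. (g s)\<^sup>2)"
    by (intro continuous_intros cont_x)
qed (use assms in auto)

lemma item5: assumes "0 \<le> x"
  shows "(rho x)\<^sup>2 \<le> 2 * (1 + 2 * \<delta>) * integral {0..x} hh"
proof -
  have I1: "((\<lambda>t. 2 * rho t * g t) has_integral (rho x)\<^sup>2 - (rho 0)\<^sup>2) {0..x}"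
  proof (rule fundamental_theorem_of_calculus[OF assms])
    fix t assume "t \<in> {0..x}"
    then have "(rho has_real_derivative g t) (at t within {0..x})" by (intro rho_deriv) auto
    then have "((\<lambda>t. (rho t)\<^sup>2) has_real_derivative 2 * rho t * g t) (at t within {0..x})"
      by (auto intro!: derivative_eq_intros)
    then show "((\<lambda>t. (rho t)\<^sup>2) has_vector_derivative 2 * rho t * g t) (at t within {0..x})"
      by (simp add: has_real_derivative_iff_has_vector_derivative)
  qed
  have r0: "rho 0 = 0" by (simp add: rho_def)
  have "continuous_on {0..x} hh"
    by (rule DERIV_continuous_on[of _ _ "\<lambda>t. (g t)\<^sup>2"]) (use hh_deriv in auto)
  then have I2: "((\<lambda>t. 2 * (1 + 2 * \<delta>) * hh t) has_integral 2 * (1 + 2 * \<delta>) * integral {0..x} hh) {0..x}"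
    by (intro has_integral_mult_right integrable_integral integrable_continuous_interval)
  have "(rho x)\<^sup>2 - (rho 0)\<^sup>2 \<le> 2 * (1 + 2 * \<delta>) * integral {0..x} hh"
  proof (rule has_integral_le[OF I1 I2])
    fix t assume "t \<in> {0..x}"
    then have "rho t * g t \<le> (1 + 2 * \<delta>) * hh t" using rho_g_le[of t] by auto
    then show "2 * rho t * g t \<le> 2 * (1 + 2 * \<delta>) * hh t" by (simp only: mult.assoc)
  qed
  then show ?thesis using r0 by simp
qed

lemma alg: fixes A B d :: real
  assumes "0 < d" "d < 1/2" "0 \<le> A" "0 \<le> B" "B \<le> (1 + 2*d) * A" "A \<le> (1+d)\<^sup>2 * B"
  shows "(A + B)\<^sup>2 \<le> 4 * (1 + 2*d) * A * B"
proof -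
  define c where "c = 1 + 2*d"
  define a where "a = (1+d)\<^sup>2"
  have h1: "0 \<le> (c*A - B)*(a*B - A)" using assms unfolding a_def c_def
    by (intro mult_nonneg_nonneg) linarith+
  have e: "c*(4*c-2-a)-1 = 8*d + 11*d\<^sup>2 - 2*d^3" unfolding a_def c_def
    by (simp add: power2_eq_square power3_eq_cube algebra_simps)
  have "2*d^3 \<le> d\<^sup>2" using assms by (simp add: power2_eq_square power3_eq_cube)
  then have "0 \<le> c*(4*c-2-a)-1" unfolding e using assms
    by (smt (verit) zero_le_power2)
  then have h2: "0 \<le> (c*(4*c-2-a)-1)*A*B" using assms by simp
  have h3: "0 \<le> (a-c)*B*B" using assms unfolding a_def c_def by (simp add: power2_eq_square algebra_simps)
  have id: "c*(4*c*A*B - (A+B)\<^sup>2) = (c*A - B)*(a*B - A) + (c*(4*c-2-a)-1)*A*B + (a-c)*B*B"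
    by (simp add: power2_eq_square algebra_simps)
  have "0 \<le> c*(4*c*A*B - (A+B)\<^sup>2)" unfolding id using h1 h2 h3 by linarith
  moreover have "0 < c" using assms unfolding c_def by simp
  ultimately have "0 \<le> 4*c*A*B - (A+B)\<^sup>2" by (simp add: zero_le_mult_iff)
  then show ?thesis unfolding c_def by simp
qed

lemma item6: assumes "0 < x"
  shows "\<exists>D. ((\<lambda>s. sqrt (s * hh s)) has_real_derivative D) (at x within {0..}) \<and>
          D\<^sup>2 \<le> (1 + 2 * \<delta>) * (g x)\<^sup>2"
proof -
  have g0: "0 < g x" using pos assms by auto
  have "0 < x * (g x)\<^sup>2" using assms g0 by simp
  then have "0 < (1 + 2 * \<delta>) * hh x" using item2[of x] assms by linarith
  then have hpos: "0 < hh x" using dpos by (simp add: zero_less_mult_iff)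
  have "(hh has_real_derivative (g x)\<^sup>2) (at x within {0..x+1})" using hh_deriv assms by auto
  moreover have "at x within {0..x+1} = at x" using assms by (intro at_within_Icc_at) auto
  ultimately have dh: "(hh has_real_derivative (g x)\<^sup>2) (at x)" by simp
  have ds: "((\<lambda>s. s * hh s) has_real_derivative (1 * hh x + (g x)\<^sup>2 * x)) (at x)"
    by (rule DERIV_mult[OF DERIV_ident dh])
  have xh: "0 < x * hh x" using assms hpos by simp
  define D where "D = (hh x + x * (g x)\<^sup>2) / (2 * sqrt (x * hh x))"
  have "((\<lambda>s. sqrt (s * hh s)) has_real_derivative inverse (sqrt (x * hh x)) / 2 * (1 * hh x + (g x)\<^sup>2 * x)) (at x)"
    by (rule DERIV_chain2[OF DERIV_real_sqrt[OF xh] ds])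
  moreover have "inverse (sqrt (x * hh x)) / 2 * (1 * hh x + (g x)\<^sup>2 * x) = D"
    unfolding D_def by (simp add: field_simps)
  ultimately have "((\<lambda>s. sqrt (s * hh s)) has_real_derivative D) (at x)" by simp
  then have "((\<lambda>s. sqrt (s * hh s)) has_real_derivative D) (at x within {0..})"
    by (rule has_field_derivative_at_within)
  moreover have "D\<^sup>2 \<le> (1 + 2 * \<delta>) * (g x)\<^sup>2"
  proof -
    have B: "x * (g x)\<^sup>2 \<le> (1 + 2 * \<delta>) * hh x" using item2 assms by auto
    have r: "rho x \<le> (1 + \<delta>) * x * g x" using rho_up assms by auto
    have "hh x \<le> (1 + \<delta>) * g x * rho x" using hh_up assms by auto
    also have "\<dots> \<le> (1 + \<delta>) * g x * ((1 + \<delta>) * x * g x)"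
      using r g0 dpos by (intro mult_left_mono) auto
    finally have A: "hh x \<le> (1 + \<delta>)\<^sup>2 * (x * (g x)\<^sup>2)" by (simp add: power2_eq_square mult_ac)
    have key: "(hh x + x * (g x)\<^sup>2)\<^sup>2 \<le> 4 * (1 + 2*\<delta>) * hh x * (x * (g x)\<^sup>2)"
      by (rule alg[OF dpos dlt]) (use A B hpos assms in auto)
    have sq: "(sqrt (x * hh x))\<^sup>2 = x * hh x" using xh by simp
    have "D\<^sup>2 = (hh x + x * (g x)\<^sup>2)\<^sup>2 / (2 * sqrt (x * hh x))\<^sup>2"
      unfolding D_def by (rule power_divide)
    also have "(2 * sqrt (x * hh x))\<^sup>2 = 4 * (x * hh x)"
      by (simp only: power_mult_distrib sq) simp
    finally have "D\<^sup>2 = (hh x + x * (g x)\<^sup>2)\<^sup>2 / (4 * (x * hh x))" .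
    also have "\<dots> \<le> 4 * (1 + 2*\<delta>) * hh x * (x * (g x)\<^sup>2) / (4 * (x * hh x))"
      using key xh by (intro divide_right_mono) auto
    also have "\<dots> = (1 + 2 * \<delta>) * (g x)\<^sup>2" using assms hpos by (simp add: field_simps)
    finally show ?thesis .
  qed
  ultimately show ?thesis by blast
qed

end

lemma two_powr_le: assumes "0 \<le> d" "d \<le> 1" shows "2 powr d \<le> 1 + (d::real)"
proof -
  have "exp ((1 - d) *\<^sub>R 0 + d *\<^sub>R ln 2) \<le> (1 - d) * exp 0 + d * exp (ln 2)"
    by (rule convex_onD[OF exp_convex]) (use assms in auto)
  then show ?thesis by (simp add: powr_def mult.commute)
qed

lemma g_facts:
  assumes xi: "admissible_xi \<xi>" and y2: "2 \<le> y" and R: "2 < R"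
  shows "continuous_on {0..} (\<lambda>x. gR \<xi> R x y)"
    and "\<And>t. 0 \<le> t \<Longrightarrow> sqrt 2 \<le> gR \<xi> R t y"
    and "\<And>t. 0 \<le> t \<Longrightarrow> t \<le> 1 \<Longrightarrow> gR \<xi> R t y = sqrt 2"
    and "\<And>t x. 2 \<le> t \<Longrightarrow> t \<le> x \<Longrightarrow> gR \<xi> R t y \<le> gR \<xi> R x y"
    and "\<And>t. 0 \<le> t \<Longrightarrow> (gR \<xi> R t y)\<^sup>2 = dzeta \<xi> (min t R) y"
    and "\<And>t. 0 \<le> t \<Longrightarrow> dzeta \<xi> (min t R) y \<le> dzeta \<xi> t y"
proof -
  note zf = zeta_facts[OF xi y2]
  have "continuous_on {0..} (\<lambda>x. dzeta \<xi> (min x R) y)"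
    by (rule continuous_on_compose2[OF zf(2)]) (use R in \<open>auto intro!: continuous_intros\<close>)
  then show "continuous_on {0..} (\<lambda>x. gR \<xi> R x y)"
    unfolding gR_def by (intro continuous_intros)
  show "sqrt 2 \<le> gR \<xi> R t y" if "0 \<le> t" for t
    unfolding gR_def using zf(3)[of "min t R"] that R by auto
  show "gR \<xi> R t y = sqrt 2" if "0 \<le> t" "t \<le> 1" for t
    unfolding gR_def using zf(4)[of t] that R by auto
  have mono: "dzeta \<xi> a y \<le> dzeta \<xi> b y" if "2 \<le> a" "a \<le> b" for a b
  proof -
    have "a powr (y-2) \<le> b powr (y-2)" using that y2 by (intro powr_mono2) auto
    moreover have "0 \<le> y*(y-1)" using y2 by simp
    ultimately show ?thesis using zf(5)[of a] zf(5)[of b] that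
      by (simp add: mult_left_mono)
  qed
  show "gR \<xi> R t y \<le> gR \<xi> R x y" if "2 \<le> t" "t \<le> x" for t x
    unfolding gR_def using mono[of "min t R" "min x R"] that R by auto
  show "(gR \<xi> R t y)\<^sup>2 = dzeta \<xi> (min t R) y" if "0 \<le> t" for t
    unfolding gR_def using zf(3)[of "min t R"] that R by auto
  show "dzeta \<xi> (min t R) y \<le> dzeta \<xi> t y" if "0 \<le> t" for t
    using mono[of R t] R by (cases "t \<le> R") auto
qed

theorem mainTheorem20:
  fixes \<xi> :: "real \<Rightarrow> real" and \<delta> y0 :: real
  assumes xi: "admissible_xi \<xi>"
    and delta: "0 < \<delta>" "\<delta> < 1/2"
    and y0: "y0 > 2"
    and mono: "\<forall>y\<in>{2..y0}. \<forall>R>2. antimono_on {0<..} (\<lambda>x. gR \<xi> R x y * x powr (- \<delta>))"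
  shows "\<forall>R>2. \<forall>x\<ge>0. \<forall>y\<in>{2..y0}.
     x * gR \<xi> R x y \<le> (1 + \<delta>) * rhoR \<xi> R x y \<and>
     x * (gR \<xi> R x y)\<^sup>2 \<le> (1 + 2 * \<delta>) * hR \<xi> R x y \<and>
     x * hR \<xi> R x y \<le> (1 + \<delta>)\<^sup>2 * (rhoR \<xi> R x y)\<^sup>2 \<and>
     x * (gR \<xi> R x y)\<^sup>2 - hR \<xi> R x y
       \<le> 2 * \<delta> * (1 + \<delta>) / (1 + 2 * \<delta>) * rhoR \<xi> R x y * gR \<xi> R x y \<and>
     (rhoR \<xi> R x y)\<^sup>2 \<le> 2 * (1 + 2 * \<delta>) * phiR \<xi> R x y \<and>
     2 * (1 + 2 * \<delta>) * phiR \<xi> R x y \<le> 2 * (1 + 2 * \<delta>) * tau \<xi> x y \<and>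
     (\<exists>D. ((\<lambda>s. psiR \<xi> R s y) has_real_derivative D) (at x within {0..}) \<and>
          D\<^sup>2 \<le> (1 + 2 * \<delta>) * (gR \<xi> R x y)\<^sup>2)"
proof (intro allI impI ballI)
  fix R x y :: real assume R: "R > 2" and x: "x \<ge> 0" and y: "y \<in> {2..y0}"
  have y2: "2 \<le> y" using y by auto
  note gf = g_facts[OF xi y2 R]
  note zf = zeta_facts[OF xi y2]
  define g where "g = (\<lambda>t. gR \<xi> R t y)"
  have anti: "antimono_on {0<..} (\<lambda>x. g x * x powr (- \<delta>))"
    using mono y R unfolding g_def by auto
  have gs: "sqrt 2 \<le> g t" if "0 \<le> t" for t using gf(2) that unfolding g_def by auto
  have gnn: "0 \<le> g t" if "0 \<le> t" for t using gs[OF that] real_sqrt_ge_zero[of 2] by linarith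
  have K: "g t \<le> (1 + \<delta>) * g s" if "0 \<le> t" "t \<le> s" for t s
  proof -
    have a: "sqrt 2 * (1 + \<delta>) \<le> g s * (1 + \<delta>)"
      using gs[of s] that delta by (intro mult_right_mono) auto
    show ?thesis
    proof (cases "t \<le> 2")
      case True
      show ?thesis
      proof (cases "t \<le> 1")
        case True
        then have gt: "g t = sqrt 2" using gf(3) that unfolding g_def by auto
        have "sqrt 2 * 1 \<le> sqrt 2 * (1+\<delta>)" using delta by (intro mult_left_mono) auto
        then have "g t \<le> g s * (1+\<delta>)" using a gt by linarith
        then show ?thesis by (simp add: mult.commute)
      next
        case False
        then have t1: "1 \<le> t" by simp
        have g1: "g 1 = sqrt 2" using gf(3)[of 1] unfolding g_def by auto
        have "g t * t powr (- \<delta>) \<le> g 1 * 1 powr (- \<delta>)"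
          using monotone_onD[OF anti, of 1 t] t1 by auto
        then have "g t * t powr (- \<delta>) \<le> sqrt 2" using g1 by simp
        then have "g t * t powr (- \<delta>) * t powr \<delta> \<le> sqrt 2 * t powr \<delta>"
          by (intro mult_right_mono) auto
        moreover have "g t * t powr (- \<delta>) * t powr \<delta> = g t" using t1
          by (simp add: mult.assoc powr_add[symmetric])
        ultimately have b: "g t \<le> sqrt 2 * t powr \<delta>" by simp
        have "t powr \<delta> \<le> 2 powr \<delta>" using True t1 delta by (intro powr_mono2) auto
        also have "\<dots> \<le> 1 + \<delta>" using delta by (intro two_powr_le) auto
        finally have "sqrt 2 * t powr \<delta> \<le> sqrt 2 * (1 + \<delta>)" by (intro mult_left_mono) auto
        then have "g t \<le> g s * (1 + \<delta>)" using a b by linarith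
        then show ?thesis by (simp add: mult.commute)
      qed
    next
      case False
      then have "g t \<le> g s" using gf(4)[of t s] that unfolding g_def by auto
      moreover have "1 * g s \<le> (1 + \<delta>) * g s"
        by (intro mult_right_mono) (use gnn[of s] delta that in auto)
      ultimately show ?thesis by simp
    qed
  qed
  interpret A: absg g \<delta>
  proof
    show "continuous_on {0..} g" using gf(1) unfolding g_def by simp
    show "0 < g t" if "0 \<le> t" for t using gs[OF that] real_sqrt_gt_zero[of 2] by linarith
  qed (use anti K delta in auto)
  have rho_eq: "rhoR \<xi> R s y = A.rho s" for s unfolding rhoR_def A.rho_def by (simp add: g_def)
  have hh_eq: "hR \<xi> R s y = A.hh s" for s unfolding hR_def A.hh_def by (simp add: g_def)
  have phi_eq: "phiR \<xi> R x y = integral {0..x} A.hh" by (simp add: phiR_def hh_eq)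
  have psi_eq: "(\<lambda>s. psiR \<xi> R s y) = (\<lambda>s. sqrt (s * A.hh s))"
    by (simp add: psiR_def hh_eq)
  have gx: "gR \<xi> R x y = g x" by (simp add: g_def)
  have Hle: "A.hh s \<le> zeta \<xi> s y" if s: "0 \<le> s" for s
  proof -
    have I1: "((\<lambda>t. (g t)\<^sup>2) has_integral A.hh s) {0..s}"
      unfolding A.hh_def using A.int_g2 by auto
    have I2: "((\<lambda>t. dzeta \<xi> t y) has_integral (zeta \<xi> s y - zeta \<xi> 0 y)) {0..s}"
    proof (rule fundamental_theorem_of_calculus[OF s])
      fix t assume "t \<in> {0..s}"
      then have "((\<lambda>s. zeta \<xi> s y) has_real_derivative dzeta \<xi> t y) (at t within {0..s})"
        by (intro has_field_derivative_subset[OF zf(1)]) auto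
      then show "((\<lambda>s. zeta \<xi> s y) has_vector_derivative dzeta \<xi> t y) (at t within {0..s})"
        by (simp add: has_real_derivative_iff_has_vector_derivative)
    qed
    have z0: "zeta \<xi> 0 y = 0" by (simp add: zeta_def)
    have "A.hh s \<le> zeta \<xi> s y - zeta \<xi> 0 y"
    proof (rule has_integral_le[OF I1 I2])
      fix t assume "t \<in> {0..s}"
      then show "(g t)\<^sup>2 \<le> dzeta \<xi> t y" using gf(5)[of t] gf(6)[of t] unfolding g_def by auto
    qed
    then show ?thesis using z0 by simp
  qed
  have phitau: "phiR \<xi> R x y \<le> tau \<xi> x y"
    unfolding phi_eq tau_def
  proof (rule integral_le)
    show "A.hh integrable_on {0..x}"
      by (rule integrable_continuous_interval, rule DERIV_continuous_on[of _ _ "\<lambda>t. (g t)\<^sup>2"])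
         (use A.hh_deriv in auto)
    show "(\<lambda>s. zeta \<xi> s y) integrable_on {0..x}"
      by (rule integrable_continuous_interval, rule DERIV_continuous_on[of _ _ "\<lambda>t. dzeta \<xi> t y"])
         (use has_field_derivative_subset[OF zf(1)] in auto)
  qed (use Hle in auto)
  have psi: "\<exists>D. ((\<lambda>s. sqrt (s * A.hh s)) has_real_derivative D) (at x within {0..}) \<and>
          D\<^sup>2 \<le> (1 + 2 * \<delta>) * (g x)\<^sup>2"
  proof (cases "x = 0")
    case False
    then show ?thesis using A.item6[of x] x by auto
  next
    case True
    have h2: "A.hh s = 2 * s" if "0 \<le> s" "s \<le> 1" for s
    proof -
      have "A.hh s = integral {0..s} (\<lambda>t. 2)"
        unfolding A.hh_def
        by (rule integral_cong) (use gf(3) that in \<open>auto simp: g_def\<close>)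
      then show ?thesis using that by simp
    qed
    have "((\<lambda>s. sqrt 2 * s) has_real_derivative sqrt 2) (at x within {0..})"
      by (auto intro!: derivative_eq_intros)
    then have "((\<lambda>s. sqrt (s * A.hh s)) has_real_derivative sqrt 2) (at x within {0..})"
    proof (rule has_field_derivative_transform_within[of _ _ _ _ 1])
      fix s assume "s \<in> {0::real..}" "dist s x < 1"
      then have s: "0 \<le> s" "s \<le> 1" using True by (auto simp: dist_real_def)
      have "sqrt (s * A.hh s) = sqrt (2 * s\<^sup>2)" using h2[OF s] by (simp add: power2_eq_square mult_ac)
      also have "\<dots> = sqrt 2 * s" using s by (simp add: real_sqrt_mult)
      finally show "sqrt 2 * s = sqrt (s * A.hh s)" by simp
    qed (use x in auto)
    moreover have "(sqrt 2)\<^sup>2 \<le> (1 + 2 * \<delta>) * (g x)\<^sup>2"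
      using gf(3)[of x] True delta by (simp add: g_def)
    ultimately show ?thesis by blast
  qed
  show "x * gR \<xi> R x y \<le> (1 + \<delta>) * rhoR \<xi> R x y \<and>
     x * (gR \<xi> R x y)\<^sup>2 \<le> (1 + 2 * \<delta>) * hR \<xi> R x y \<and>
     x * hR \<xi> R x y \<le> (1 + \<delta>)\<^sup>2 * (rhoR \<xi> R x y)\<^sup>2 \<and>
     x * (gR \<xi> R x y)\<^sup>2 - hR \<xi> R x y
       \<le> 2 * \<delta> * (1 + \<delta>) / (1 + 2 * \<delta>) * rhoR \<xi> R x y * gR \<xi> R x y \<and>
     (rhoR \<xi> R x y)\<^sup>2 \<le> 2 * (1 + 2 * \<delta>) * phiR \<xi> R x y \<and>
     2 * (1 + 2 * \<delta>) * phiR \<xi> R x y \<le> 2 * (1 + 2 * \<delta>) * tau \<xi> x y \<and>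
     (\<exists>D. ((\<lambda>s. psiR \<xi> R s y) has_real_derivative D) (at x within {0..}) \<and>
          D\<^sup>2 \<le> (1 + 2 * \<delta>) * (gR \<xi> R x y)\<^sup>2)"
    unfolding gx rho_eq hh_eq phi_eq[symmetric] psi_eq
    using A.item1[OF x] A.item2[OF x] A.item3[OF x] A.item4[OF x] A.item5[OF x]
      phitau psi delta unfolding phi_eq
    by (auto intro: mult_left_mono)
qed

end
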